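(* Let $\Gamma=\{\{(1)\},\{(0)\},\rightarrow,=\}\cup\{\mathrm{OR}^m : m\in\mathbb N, m\ge1\}$. Then every irreducible Boolean relation which is IHSB$+$ is a permutation of an element of $\Gamma$.
   Context: Here $\rightarrow=\{(0,0),(0,1),(1,1)\}$, $==\{(0,0),(1,1)\}$, $\{(1)\},\{(0)\}$ express the literals $x,\overline x$, and $\mathrm{OR}^m=\{0,1\}^m\setminus\{(0,\dots,0)\}$. A Boolean relation is IHSB$+$ if it is the solution set of a conjunction of clauses of the forms $x$, $\overline x$, $x\rightarrow y$, $(x_1\vee\dots\vee x_n)$. An $n$-ary relation $R$ is irreducible if for every formula $R_1(x^1_1,\dots,x^1_{k_1})\wedge\dots\wedge R_m(x^m_1,\dots,x^m_{k_m})$ (each $R_i$ an arbitrary $k_i$-ary Boolean relation, variables among $x_1,\dots,x_n$) equivalent to $R(x_1,\dots,x_n)$, some $R_i$ has arity at least $n$. A relation $R$ is a permutation of $S$ if $R(x_1,\dots,x_n)$ is equivalent to $S(x_{\Pi(1)},\dots,x_{\Pi(n)})$ for some permutation $\Pi$ of $\{1,\dots,n\}$. *)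

theory Defs
  imports Main
begin

text \<open>An n-ary Boolean relation is a set of bool lists of length n;
 position i of a tuple is the value of variable x_(i+1).\<close>

definition is_rel :: "nat \<Rightarrow> bool list set \<Rightarrow> bool" where
  "is_rel n R \<longleftrightarrow> (\<forall>t\<in>R. length t = n)"

datatype clause = CPos nat | CNeg nat | CImp nat nat | COr "nat list"

fun clause_vars :: "clause \<Rightarrow> nat set" where
  "clause_vars (CPos i) = {i}"
| "clause_vars (CNeg i) = {i}"
| "clause_vars (CImp i j) = {i, j}"
| "clause_vars (COr is) = set is"

fun clause_wf :: "clause \<Rightarrow> bool" where
  "clause_wf (COr is) = (is \<noteq> [])"
| "clause_wf _ = True"

fun clause_sat :: "bool list \<Rightarrow> clause \<Rightarrow> bool" where
  "clause_sat a (CPos i) = (a ! i)"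
| "clause_sat a (CNeg i) = (\<not> a ! i)"
| "clause_sat a (CImp i j) = (a ! i \<longrightarrow> a ! j)"
| "clause_sat a (COr is) = (\<exists>i\<in>set is. a ! i)"

definition IHSB_plus :: "nat \<Rightarrow> bool list set \<Rightarrow> bool" where
  "IHSB_plus n R \<longleftrightarrow> (\<exists>cs :: clause list.
     (\<forall>c\<in>set cs. clause_wf c \<and> clause_vars c \<subseteq> {..<n}) \<and>
     R = {a. length a = n \<and> (\<forall>c\<in>set cs. clause_sat a c)})"

text \<open>An atom (k, S, vs) stands for S(x_vs!0, ..., x_vs!(k-1)) with S a k-ary relation.\<close>
definition atom_ok :: "nat \<Rightarrow> nat \<times> bool list set \<times> nat list \<Rightarrow> bool" where
  "atom_ok n at = (case at of (k, S, vs) \<Rightarrow>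
     is_rel k S \<and> length vs = k \<and> set vs \<subseteq> {..<n})"

definition atom_sat :: "bool list \<Rightarrow> nat \<times> bool list set \<times> nat list \<Rightarrow> bool" where
  "atom_sat a at = (case at of (k, S, vs) \<Rightarrow> map (\<lambda>j. a ! j) vs \<in> S)"

definition irreducible :: "nat \<Rightarrow> bool list set \<Rightarrow> bool" where
  "irreducible n R \<longleftrightarrow> (\<forall>F :: (nat \<times> bool list set \<times> nat list) list.
     (\<forall>at\<in>set F. atom_ok n at) \<and>
     {a. length a = n \<and> (\<forall>at\<in>set F. atom_sat a at)} = R
     \<longrightarrow> (\<exists>at\<in>set F. fst at \<ge> n))"

definition is_permutation_of :: "nat \<Rightarrow> bool list set \<Rightarrow> bool list set \<Rightarrow> bool" where
  "is_permutation_of n R S \<longleftrightarrow> (\<exists>\<pi>. bij_betw \<pi> {..<n} {..<n} \<and>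
     R = {a. length a = n \<and> map (\<lambda>i. a ! \<pi> i) [0..<n] \<in> S})"

definition OR_rel :: "nat \<Rightarrow> bool list set" where
  "OR_rel m = {a. length a = m \<and> True \<in> set a}"

definition Gamma :: "(nat \<times> bool list set) set" where
  "Gamma = {(1, {[True]}), (1, {[False]}),
            (2, {[False, False], [False, True], [True, True]}),
            (2, {[False, False], [True, True]})}
           \<union> {(m, OR_rel m) | m. m \<ge> 1}"

end

theory Submission
  imports Defs
begin

lemma red:
  assumes L: "\<forall>(vs,P)\<in>set L. set vs \<subseteq> {..<n} \<and> length vs < n"
    and R: "R = {a. length a = n \<and> (\<forall>(vs,P)\<in>set L. P (map (\<lambda>j. a!j) vs))}"
  shows "\<not> irreducible n R"
proof
  assume irr: "irreducible n R"
  define F where "F = map (\<lambda>(vs,P). (length vs, {t. length t = length vs \<and> P t}, vs)) L"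
  have ok: "\<forall>at\<in>set F. atom_ok n at"
    using L by (auto simp: F_def atom_ok_def is_rel_def)
  have eq: "{a. length a = n \<and> (\<forall>at\<in>set F. atom_sat a at)} = R"
    unfolding R by (auto simp: F_def atom_sat_def)
  from irr ok eq obtain at where "at \<in> set F" "fst at \<ge> n"
    unfolding irreducible_def by blast
  then show False using L by (auto simp: F_def)
qed

lemma perm_id:
  assumes "R = {a. length a = n \<and> a \<in> S}"
  shows "is_permutation_of n R S"
  unfolding is_permutation_of_def
proof (intro exI[of _ id] conjI)
  show "bij_betw id {..<n} {..<n}" by simp
  show "R = {a. length a = n \<and> map (\<lambda>i. a ! id i) [0..<n] \<in> S}"
    using assms by (auto simp: map_nth)
qed

lemma closure:
  assumes "IHSB_plus n R" "a \<in> R" "b \<in> R" "c \<in> R" "length r = n"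
    and "\<forall>i<n. r!i = (a!i \<or> (b!i \<and> c!i))"
  shows "r \<in> R"
proof -
  from assms(1) obtain cs where wf: "\<forall>c\<in>set cs. clause_wf c \<and> clause_vars c \<subseteq> {..<n}"
    and R: "R = {a. length a = n \<and> (\<forall>c\<in>set cs. clause_sat a c)}"
    unfolding IHSB_plus_def by blast
  have "clause_sat r d" if d: "d \<in> set cs" for d
  proof -
    have sa: "clause_sat a d" "clause_sat b d" "clause_sat c d" using d assms(2-4) R by auto
    have vs: "clause_vars d \<subseteq> {..<n}" using wf d by auto
    show ?thesis
    proof (cases d)
      case (COr js)
      then obtain i where "i \<in> set js" "a!i" using sa by auto
      then show ?thesis using COr vs assms(6) by auto
    qed (use sa vs assms(6) in auto)
  qed
  then show ?thesis using R assms(5) by auto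
qed

lemma len1: "length a = Suc 0 \<longleftrightarrow> (\<exists>x. a = [x])"
  by (auto simp: length_Suc_conv)
lemma len2: "length a = 2 \<longleftrightarrow> (\<exists>x y. a = [x,y])"
  by (auto simp: length_Suc_conv numeral_2_eq_2)

fun rep :: "clause \<Rightarrow> nat list \<times> (bool list \<Rightarrow> bool)" where
  "rep (CPos i) = ([i], \<lambda>t. t!0)"
| "rep (CNeg i) = ([i], \<lambda>t. \<not> t!0)"
| "rep (CImp i j) = ([i,j], \<lambda>t. t!0 \<longrightarrow> t!1)"
| "rep (COr js) = (remdups js, \<lambda>t. True \<in> set t)"

lemma rep_sat: "snd (rep c) (map (\<lambda>j. a!j) (fst (rep c))) = clause_sat a c"
  by (cases c) auto

lemma rep_vars: "set (fst (rep c)) = clause_vars c"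
  by (cases c) auto

lemma repL: "(\<forall>(vs,P)\<in>set (map rep cs). P (map (\<lambda>j. a!j) vs)) = (\<forall>c\<in>set cs. clause_sat a c)"
  by (simp add: case_prod_beta rep_sat)

definition big :: "nat \<Rightarrow> clause \<Rightarrow> bool" where
  "big n c \<longleftrightarrow> (\<exists>js. c = COr js \<and> set js = {..<n})"

definition triv :: "clause \<Rightarrow> bool" where
  "triv c \<longleftrightarrow> (\<exists>i. c = CImp i i)"

lemma rep_len:
  assumes "n \<ge> 3" "clause_vars c \<subseteq> {..<n}" "\<not> big n c"
  shows "length (fst (rep c)) < n"
proof (cases c)
  case (COr js)
  have "set js \<subset> {..<n}" using assms COr by (auto simp: big_def)
  then have "card (set js) < n" by (metis card_lessThan finite_lessThan psubset_card_mono)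
  then show ?thesis using COr by (simp add: length_remdups_card_conv)
qed (use assms in auto)

lemma OR_eq: "length a = n \<Longrightarrow> (True \<in> set a) = (\<exists>i<n. a!i)"
  by (auto simp: in_set_conv_nth)

lemma filt_len: "i < n \<Longrightarrow> length (filter (\<lambda>k. k \<noteq> i) [0..<n]) < n"
  using length_filter_less[of i "[0..<n]" "\<lambda>k. k \<noteq> i"] by simp

lemma filt_set: "(True \<in> set (map (\<lambda>j. a!j) (filter (\<lambda>k. k \<noteq> i) [0..<n]))) = (\<exists>k<n. k \<noteq> i \<and> a!k)"
  by auto

lemma L_app: "(\<forall>(vs,P)\<in>set (map rep S @ [(ws, \<lambda>t. True \<in> set t)]). P (map (\<lambda>j. a!j) vs))
   = ((\<forall>c\<in>set S. clause_sat a c) \<and> True \<in> set (map (\<lambda>j. a!j) ws))"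
  using repL[of S a] by auto

lemma drop_var:
  assumes "\<And>a. length a = n \<Longrightarrow> \<forall>c\<in>set S. clause_sat a c \<Longrightarrow> (True \<in> set a) = (\<exists>k<n. k \<noteq> i \<and> a!k)"
  shows "{a. length a = n \<and> (\<forall>c\<in>set S. clause_sat a c) \<and> True \<in> set a} =
   {a. length a = n \<and> (\<forall>(vs,P)\<in>set (map rep S @ [(filter (\<lambda>k. k \<noteq> i) [0..<n], \<lambda>t. True \<in> set t)]). P (map (\<lambda>j. a!j) vs))}"
  unfolding L_app filt_set using assms by blast

lemma big_case:
  assumes n: "n \<ge> 3" and ih: "IHSB_plus n R" and irr: "irreducible n R"
  shows "is_permutation_of n R (OR_rel n)"
proof -
  from ih obtain cs where wf: "\<forall>c\<in>set cs. clause_wf c \<and> clause_vars c \<subseteq> {..<n}"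
    and R: "R = {a. length a = n \<and> (\<forall>c\<in>set cs. clause_sat a c)}"
    unfolding IHSB_plus_def by blast
  define S where "S = filter (\<lambda>c. \<not> big n c \<and> \<not> triv c) cs"
  have Sw: "\<forall>c\<in>set S. clause_wf c \<and> clause_vars c \<subseteq> {..<n} \<and> \<not> big n c \<and> \<not> triv c"
    using wf unfolding S_def by simp
  have Lok0: "set (fst (rep c)) \<subseteq> {..<n} \<and> length (fst (rep c)) < n" if "c \<in> set S" for c
  proof -
    have "clause_vars c \<subseteq> {..<n}" "\<not> big n c" using Sw that by auto
    then show ?thesis using rep_len[OF n] rep_vars[of c] by simp
  qed
  have Lok: "\<forall>(vs,P)\<in>set (map rep S). set vs \<subseteq> {..<n} \<and> length vs < n"
    using Lok0 by (auto simp: case_prod_beta)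
  have repS: "(\<forall>(vs,P)\<in>set (map rep S). P (map (\<lambda>j. a!j) vs)) = (\<forall>c\<in>set S. clause_sat a c)" for a
    by (rule repL)
  have bigex: "\<exists>c\<in>set cs. big n c"
  proof (rule ccontr)
    assume nb: "\<not> ?thesis"
    define L where "L = map rep cs"
    have L0: "set (fst (rep c)) \<subseteq> {..<n} \<and> length (fst (rep c)) < n" if "c \<in> set cs" for c
    proof -
      have "clause_vars c \<subseteq> {..<n}" "\<not> big n c" using wf nb that by auto
      then show ?thesis using rep_len[OF n] rep_vars[of c] by simp
    qed
    have "\<forall>(vs,P)\<in>set L. set vs \<subseteq> {..<n} \<and> length vs < n"
      using L0 by (auto simp: L_def case_prod_beta)
    moreover have "R = {a. length a = n \<and> (\<forall>(vs,P)\<in>set L. P (map (\<lambda>j. a!j) vs))}"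
      unfolding R L_def repL ..
    ultimately have "\<not> irreducible n R" by (rule red)
      then show False using irr by simp
  qed
  have R2: "R = {a. length a = n \<and> (\<forall>c\<in>set S. clause_sat a c) \<and> True \<in> set a}"
  proof -
    have "(\<forall>c\<in>set cs. clause_sat a c) = ((\<forall>c\<in>set S. clause_sat a c) \<and> True \<in> set a)"
      if "length a = n" for a
    proof -
      have bg: "c \<in> set cs \<Longrightarrow> big n c \<Longrightarrow> clause_sat a c = (True \<in> set a)" for c
      proof -
        assume "big n c"
        then obtain js where js: "c = COr js" "set js = {..<n}" unfolding big_def by blast
        have "clause_sat a c = (\<exists>i\<in>set js. a!i)" using js(1) by simp
        also have "\<dots> = (\<exists>i<n. a!i)" using js(2) by auto
        finally show ?thesis using OR_eq[OF that] by simp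
      qed
      have tr: "triv c \<Longrightarrow> clause_sat a c" for c unfolding triv_def by auto
      show ?thesis
      proof
        assume A: "\<forall>c\<in>set cs. clause_sat a c"
        have "\<forall>c\<in>set S. clause_sat a c" using A by (simp add: S_def)
        moreover obtain c where "c \<in> set cs" "big n c" using bigex by blast
        then have "True \<in> set a" using A bg by blast
        ultimately show "(\<forall>c\<in>set S. clause_sat a c) \<and> True \<in> set a" by blast
      next
        assume B: "(\<forall>c\<in>set S. clause_sat a c) \<and> True \<in> set a"
        show "\<forall>c\<in>set cs. clause_sat a c"
        proof
          fix c assume c: "c \<in> set cs"
          show "clause_sat a c"
          proof (cases "big n c")
            case True then show ?thesis using bg c B by blast
          next
            case False
            show ?thesis
            proof (cases "triv c")
              case True then show ?thesis using tr by blast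
            next
              case F2: False
              then have "c \<in> set S" using False c by (simp add: S_def)
              then show ?thesis using B by blast
            qed
          qed
        qed
      qed
    qed
    then show ?thesis unfolding R by auto
  qed
  show ?thesis
  proof (cases "S = []")
    case True
    show ?thesis by (rule perm_id) (auto simp: R2 True OR_rel_def)
  next
    case False
    then obtain c where c: "c \<in> set S" by (cases S) auto
    have cw: "clause_wf c" "clause_vars c \<subseteq> {..<n}" "\<not> triv c" using Sw c by auto
    have False
    proof (cases c)
      case (CPos i)
      have "R = {a. length a = n \<and> (\<forall>(vs,P)\<in>set (map rep S). P (map (\<lambda>j. a!j) vs))}"
        proof -
        have imp: "True \<in> set a" if "length a = n" "\<forall>c\<in>set S. clause_sat a c" for a
        proof -
          have "clause_sat a c" using that(2) c by blast
          then have "a!i" using CPos by simp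
          moreover have "i < n" using cw CPos by simp
          ultimately show ?thesis using that(1) by (auto simp: in_set_conv_nth)
        qed
        show ?thesis unfolding R2 repS
        proof (intro set_eqI iffI)
          fix a assume "a \<in> {a. length a = n \<and> (\<forall>c\<in>set S. clause_sat a c) \<and> True \<in> set a}"
          then show "a \<in> {a. length a = n \<and> (\<forall>c\<in>set S. clause_sat a c)}" by simp
        next
          fix a assume "a \<in> {a. length a = n \<and> (\<forall>c\<in>set S. clause_sat a c)}"
          then have A: "length a = n" "\<forall>c\<in>set S. clause_sat a c" by simp_all
          then have "True \<in> set a" by (rule imp)
          with A show "a \<in> {a. length a = n \<and> (\<forall>c\<in>set S. clause_sat a c) \<and> True \<in> set a}" by simp
        qed
      qed
      then have "\<not> irreducible n R" by (rule red[OF Lok])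
      then show False using irr by simp
    next
      case (COr js)
      have "R = {a. length a = n \<and> (\<forall>(vs,P)\<in>set (map rep S). P (map (\<lambda>j. a!j) vs))}"
        unfolding R2 repS using c COr cw by (fastforce simp: OR_eq neq_Nil_conv)
      then have "\<not> irreducible n R" by (rule red[OF Lok])
      then show False using irr by simp
    next
      case (CNeg i)
      define L where "L = map rep S @ [(filter (\<lambda>k. k \<noteq> i) [0..<n], \<lambda>t. True \<in> set t)]"
      have i: "i < n" using cw CNeg by auto
      have "\<forall>(vs,P)\<in>set L. set vs \<subseteq> {..<n} \<and> length vs < n"
        using Lok filt_len[OF i] by (auto simp: L_def)
      moreover have "R = {a. length a = n \<and> (\<forall>(vs,P)\<in>set L. P (map (\<lambda>j. a!j) vs))}"
        unfolding R2 L_def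
      proof (rule drop_var)
        fix a :: "bool list" assume a: "length a = n" "\<forall>c\<in>set S. clause_sat a c"
        then have "\<not> a!i" using c CNeg by fastforce
        then show "(True \<in> set a) = (\<exists>k<n. k \<noteq> i \<and> a!k)" using OR_eq[OF a(1)] by metis
      qed
      ultimately have "\<not> irreducible n R" by (rule red)
      then show False using irr by simp
    next
      case (CImp i j)
      define L where "L = map rep S @ [(filter (\<lambda>k. k \<noteq> i) [0..<n], \<lambda>t. True \<in> set t)]"
      have i: "i < n" "j < n" "i \<noteq> j" using cw CImp by (auto simp: triv_def)
      have "\<forall>(vs,P)\<in>set L. set vs \<subseteq> {..<n} \<and> length vs < n"
        using Lok filt_len[OF i(1)] by (auto simp: L_def)
      moreover have "R = {a. length a = n \<and> (\<forall>(vs,P)\<in>set L. P (map (\<lambda>j. a!j) vs))}"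
        unfolding R2 L_def
      proof (rule drop_var)
        fix a :: "bool list" assume a: "length a = n" "\<forall>c\<in>set S. clause_sat a c"
        then have "a!i \<longrightarrow> a!j" using c CImp by fastforce
        then show "(True \<in> set a) = (\<exists>k<n. k \<noteq> i \<and> a!k)" unfolding OR_eq[OF a(1)] using i by metis
      qed
      ultimately have "\<not> irreducible n R" by (rule red)
      then show False using irr by simp
    qed
    then show ?thesis ..
  qed
qed


lemma vars_ne: "clause_wf c \<Longrightarrow> clause_vars c \<noteq> {}"
  by (cases c) auto

lemma case0:
  assumes "IHSB_plus 0 R" shows "\<not> irreducible 0 R"
proof -
  from assms obtain cs where wf: "\<forall>c\<in>set cs. clause_wf c \<and> clause_vars c \<subseteq> {..<0}"
    and R: "R = {a. length a = 0 \<and> (\<forall>c\<in>set cs. clause_sat a c)}"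
    unfolding IHSB_plus_def by blast
  have "cs = []" using wf vars_ne by (cases cs) auto
  then have eq: "R = {a. length a = 0 \<and> (\<forall>(vs,P)\<in>set []. P (map (\<lambda>j. a!j) vs))}" using R by simp
  show ?thesis by (rule red[OF _ eq]) simp
qed
lemma g1: "(2::nat, {[False, False], [True, True]}) \<in> Gamma"
  unfolding Gamma_def by (rule UnI1, rule insertI2, rule insertI2, rule insertI2, rule insertI1)
lemma g2: "(2::nat, {[False, False], [False, True], [True, True]}) \<in> Gamma"
  unfolding Gamma_def by (rule UnI1, rule insertI2, rule insertI2, rule insertI1)
lemma g3: "m \<ge> 1 \<Longrightarrow> (m, OR_rel m) \<in> Gamma"
  unfolding Gamma_def by (rule UnI2) blast
lemma g4: "(1::nat, {[True]}) \<in> Gamma" "(1::nat, {[False]}) \<in> Gamma"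
  unfolding Gamma_def by blast+

lemma case1:
  assumes rel: "is_rel 1 R" and irr: "irreducible 1 R"
  shows "\<exists>(k, S)\<in>Gamma. k = 1 \<and> is_permutation_of 1 R S"
proof -
  define f where "f x = ([x] \<in> R)" for x
  have R: "R = {a. length a = 1 \<and> f (a!0)}"
    using rel by (auto simp: is_rel_def f_def len1)
  consider "f True" "f False" | "f True" "\<not> f False" | "\<not> f True" "f False" | "\<not> f True" "\<not> f False"
    by blast
  then show ?thesis
  proof cases
    case 1
    then have eq: "R = {a. length a = 1 \<and> (\<forall>(vs,P)\<in>set []. P (map (\<lambda>j. a!j) vs))}"
      unfolding R by (auto) (metis (full_types))
    have "\<not> irreducible 1 R" by (rule red[OF _ eq]) simp
    then show ?thesis using irr by simp
  next
    case 2
    have fx: "f x = x" for x using 2 by (cases x) auto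
    have "is_permutation_of 1 R {[True]}"
      by (rule perm_id) (auto simp: R len1 fx)
    then show ?thesis by (intro bexI[OF _ g4(1)]) simp
  next
    case 3
    have fx: "f x = (\<not> x)" for x using 3 by (cases x) auto
    have "is_permutation_of 1 R {[False]}"
      by (rule perm_id) (auto simp: R len1 fx)
    then show ?thesis by (intro bexI[OF _ g4(2)]) simp
  next
    case 4
    then have eq: "R = {a. length a = 1 \<and> (\<forall>(vs,P)\<in>set [([], \<lambda>_. False)]. P (map (\<lambda>j. a!j) vs))}"
      unfolding R by (auto) (metis (full_types))
    have "\<not> irreducible 1 R" by (rule red[OF _ eq]) simp
    then show ?thesis using irr by simp
  qed
qed

lemma all2: "(\<forall>i<(2::nat). P i) = (P 0 \<and> P 1)"
  by (auto simp: less_Suc_eq numeral_2_eq_2)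

lemma L2: "length a = 2 \<Longrightarrow> a = [a!0, a!1]"
  by (cases a; cases "tl a"; cases "tl (tl a)") (auto simp: numeral_2_eq_2)
lemma set2: assumes "\<And>x y. P x y = ([x,y] \<in> S)"
  shows "{a. length a = 2 \<and> P (a!0) (a!1)} = {a. length a = 2 \<and> a \<in> S}"
proof (intro set_eqI iffI)
  fix a assume "a \<in> {a. length a = 2 \<and> P (a!0) (a!1)}"
  then show "a \<in> {a. length a = 2 \<and> a \<in> S}" using assms L2 by (metis (mono_tags, lifting) mem_Collect_eq)
next
  fix a assume "a \<in> {a. length a = 2 \<and> a \<in> S}"
  then show "a \<in> {a. length a = 2 \<and> P (a!0) (a!1)}" using assms L2 by (metis (mono_tags, lifting) mem_Collect_eq)
qed
lemma b: "bij_betw (\<lambda>i::nat. 1 - i) {..<2} {..<2}"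
proof -
  have e: "{..<2::nat} = {0,1}" by auto
  show ?thesis unfolding e bij_betw_def inj_on_def by auto
qed
lemma setQ: "(\<And>x y. P x y = Q x y) \<Longrightarrow> {a. length a = 2 \<and> P (a!0) (a!1)} = {a. length a = 2 \<and> Q (a!0) (a!1)}"
  by simp

lemma case2:
  assumes rel: "is_rel 2 R" and ih: "IHSB_plus 2 R" and irr: "irreducible 2 R"
  shows "\<exists>(k, S)\<in>Gamma. k = 2 \<and> is_permutation_of 2 R S"
proof -
  define f where "f x y = ([x,y] \<in> R)" for x y
  have R: "R = {a. length a = 2 \<and> f (a!0) (a!1)}"
    using rel by (auto simp: is_rel_def f_def len2)
  define g where "g x = (f x True \<or> f x False)" for x
  define h where "h y = (f True y \<or> f False y)" for y
  have cl: "f (x1 \<or> x2 \<and> x3) (y1 \<or> y2 \<and> y3)" if "f x1 y1" "f x2 y2" "f x3 y3" for x1 y1 x2 y2 x3 y3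
  proof -
    have "[x1 \<or> x2 \<and> x3, y1 \<or> y2 \<and> y3] \<in> R"
      by (rule closure[OF ih, of "[x1,y1]" "[x2,y2]" "[x3,y3]"]) (use that in \<open>auto simp: f_def all2\<close>)
    then show ?thesis by (simp add: f_def)
  qed
  have "(\<forall>x y. f x y = (g x \<and> h y)) \<or> (\<forall>x y. f x y = (x = y)) \<or> (\<forall>x y. f x y = (x \<noteq> y))
     \<or> (\<forall>x y. f x y = (x \<longrightarrow> y)) \<or> (\<forall>x y. f x y = (y \<longrightarrow> x)) \<or> (\<forall>x y. f x y = (x \<or> y))
     \<or> (\<forall>x y. f x y = (\<not> (x \<and> y)))"
    unfolding g_def h_def all_bool_eq
    by (cases "f True True"; cases "f True False"; cases "f False True"; cases "f False False") simp_all
  then show ?thesis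
  proof (elim disjE)
    assume prod: "\<forall>x y. f x y = (g x \<and> h y)"
    have eq: "R = {a. length a = 2 \<and> (\<forall>(vs,P)\<in>set [([0::nat], \<lambda>t. g (t!0)), ([1], \<lambda>t. h (t!0))].
        P (map (\<lambda>j. a!j) vs))}"
      unfolding R using prod by simp
    have "\<not> irreducible 2 R" by (rule red[OF _ eq]) simp
    then show ?thesis using irr by simp
  next
    assume eq: "\<forall>x y. f x y = (x = y)"
    have "is_permutation_of 2 R {[False, False], [True, True]}"
    proof (rule perm_id)
      show "R = {a. length a = 2 \<and> a \<in> {[False, False], [True, True]}}" unfolding R
      proof (rule set2)
        fix x y show "f x y = ([x, y] \<in> {[False, False], [True, True]})" using eq by (cases x; cases y) (simp_all add: OR_rel_def)
      qed
    qed
    then show ?thesis by (intro bexI[OF _ g1]) simp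
  next
    assume xor: "\<forall>x y. f x y = (x \<noteq> y)"
    have "f True False" "f False True" using xor by auto
    then have "f True True" using cl[of True False False True False True] by simp
    then show ?thesis using xor by simp
  next
    assume imp: "\<forall>x y. f x y = (x \<longrightarrow> y)"
    have "is_permutation_of 2 R {[False, False], [False, True], [True, True]}"
    proof (rule perm_id)
      show "R = {a. length a = 2 \<and> a \<in> {[False, False], [False, True], [True, True]}}" unfolding R
      proof (rule set2)
        fix x y show "f x y = ([x, y] \<in> {[False, False], [False, True], [True, True]})" using imp by (cases x; cases y) (simp_all add: OR_rel_def)
      qed
    qed
    then show ?thesis by (intro bexI[OF _ g2]) simp
  next
    assume rimp: "\<forall>x y. f x y = (y \<longrightarrow> x)"
    have m: "map (\<lambda>i. a ! (1 - i)) [0..<2] = [a!1, a!0]" for a :: "bool list"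
      by (simp add: numeral_2_eq_2)
    have "is_permutation_of 2 R {[False, False], [False, True], [True, True]}"
      unfolding is_permutation_of_def
    proof (rule exI[of _ "\<lambda>i. 1 - i"], rule conjI[OF b], unfold m)
      show "R = {a. length a = 2 \<and> [a!1, a!0] \<in> {[False, False], [False, True], [True, True]}}" unfolding R
      proof (rule setQ)
        fix x y show "f x y = ([y, x] \<in> {[False, False], [False, True], [True, True]})" using rimp by (cases x; cases y) simp_all
      qed
    qed
    then show ?thesis by (intro bexI[OF _ g2]) simp
  next
    assume or: "\<forall>x y. f x y = (x \<or> y)"
    have "is_permutation_of 2 R (OR_rel 2)"
    proof (rule perm_id)
      show "R = {a. length a = 2 \<and> a \<in> (OR_rel 2)}" unfolding R
      proof (rule set2)
        fix x y show "f x y = ([x, y] \<in> (OR_rel 2))" using or by (cases x; cases y) (simp_all add: OR_rel_def)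
      qed
    qed
    then show ?thesis by (intro bexI[OF _ g3]) auto
  next
    assume nand: "\<forall>x y. f x y = (\<not> (x \<and> y))"
    have "f True False" "f False True" using nand by auto
    then have "f True True" using cl[of False True True False True False] by simp
    then show ?thesis using nand by simp
  qed
qed

theorem mainTheorem11:
  fixes n :: nat and R :: "bool list set"
  assumes "is_rel n R"
    and "IHSB_plus n R"
    and "irreducible n R"
  shows "\<exists>(k, S)\<in>Gamma. k = n \<and> is_permutation_of n R S"
proof -
  consider "n = 0" | "n = 1" | "n = 2" | "n \<ge> 3" by linarith
  then show ?thesis
  proof cases
    case 1 then show ?thesis using case0 assms by simp
  next
    case 2 then show ?thesis using case1 assms by simp
  next
    case 3 then show ?thesis using case2 assms by simp
  next
    case 4
    then have "is_permutation_of n R (OR_rel n)" using big_case assms by blast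
    then show ?thesis using 4 by (intro bexI[OF _ g3]) auto
  qed
qed

end
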